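(* Let $D\ge1$ and consider the linear network $f_\theta(x)=W_D\cdots W_1x$ with $W_k\in\mathbb{R}^{d_{k+1}\times d_k}$, $d_1=d_x$, $d_{D+1}=d_y$, and loss $\ell(x,y,\theta)=\frac12\|y-W_D\cdots W_1x\|^2$, where $x$ has second-moment matrix $\Sigma_x=\mathbb{E}[xx^T]$. Let $T(\theta)=\mathrm{Tr}\,\mathbb{E}_{x,y}[\nabla_\theta^2\ell(x,y,\theta)]$. Suppose the entries of the weight matrices are independent, with entries of $W_k$ distributed as $\mathcal{N}(0,\sigma_k^2)$. Then the expected sharpness at initialization is $$\mathbb{E}[T(\theta)]=d_y\Big(\prod_{k=2}^Dd_k\Big)\mathrm{Tr}[\Sigma_x]\sum_{k=1}^D\prod_{j\ne k}\sigma_j^2,$$ where the expectation is over the random initialization. In particular, if $\sigma_k^2=\sigma^2$ and $d_k=d$ for all $k$, then $\mathbb{E}[T(\theta)]=D\,d_y\,\mathrm{Tr}[\Sigma_x](d\sigma^2)^{D-1}$.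
   Context: The product $\prod_{j\neq k}$ ranges over $j\in\{1,\dots,D\}\setminus\{k\}$. *)

theory Defs
  imports "HOL-Probability.Probability"
begin

text \<open>Parameters: theta k i j is the (i,j) entry of W_k (k = 1..D, i < d (k+1), j < d k).
  Dimensions: d :: nat => nat, with d_x = d 1 and d_y = d (D+1).\<close>

fun layer_out :: "(nat \<Rightarrow> nat) \<Rightarrow> (nat \<Rightarrow> nat \<Rightarrow> nat \<Rightarrow> real) \<Rightarrow> nat \<Rightarrow> (nat \<Rightarrow> real) \<Rightarrow> nat \<Rightarrow> real" where
  "layer_out d \<theta> 0 x = x"
| "layer_out d \<theta> (Suc k) x = (\<lambda>i. \<Sum>j<d (Suc k). \<theta> (Suc k) i j * layer_out d \<theta> k x j)"

definition net :: "(nat \<Rightarrow> nat) \<Rightarrow> nat \<Rightarrow> (nat \<Rightarrow> nat \<Rightarrow> nat \<Rightarrow> real) \<Rightarrow> (nat \<Rightarrow> real) \<Rightarrow> nat \<Rightarrow> real" where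
  "net d D \<theta> x = layer_out d \<theta> D x"

definition loss :: "(nat \<Rightarrow> nat) \<Rightarrow> nat \<Rightarrow> (nat \<Rightarrow> real) \<Rightarrow> (nat \<Rightarrow> real) \<Rightarrow> (nat \<Rightarrow> nat \<Rightarrow> nat \<Rightarrow> real) \<Rightarrow> real" where
  "loss d D x y \<theta> = 1/2 * (\<Sum>i<d (Suc D). (y i - net d D \<theta> x i)\<^sup>2)"

definition param_idx :: "(nat \<Rightarrow> nat) \<Rightarrow> nat \<Rightarrow> (nat \<times> nat \<times> nat) set" where
  "param_idx d D = {(k, i, j). k \<in> {1..D} \<and> i < d (Suc k) \<and> j < d k}"

definition perturb :: "(nat \<Rightarrow> nat \<Rightarrow> nat \<Rightarrow> real) \<Rightarrow> nat \<times> nat \<times> nat \<Rightarrow> real \<Rightarrow> nat \<Rightarrow> nat \<Rightarrow> nat \<Rightarrow> real" where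
  "perturb \<theta> p t = (\<lambda>k i j. if (k, i, j) = p then \<theta> k i j + t else \<theta> k i j)"

text \<open>T(theta) = Tr E_{x,y}[Hessian of the loss]: the sum over all parameters of the
  expected diagonal second partial derivatives.\<close>
definition sharpness :: "(nat \<Rightarrow> nat) \<Rightarrow> nat \<Rightarrow> ((nat \<Rightarrow> real) \<times> (nat \<Rightarrow> real)) measure
    \<Rightarrow> (nat \<Rightarrow> nat \<Rightarrow> nat \<Rightarrow> real) \<Rightarrow> real" where
  "sharpness d D M \<theta> = (\<Sum>p\<in>param_idx d D.
      \<integral>xy. deriv (deriv (\<lambda>t. loss d D (fst xy) (snd xy) (perturb \<theta> p t))) 0 \<partial>M)"

end

theory Submission
  imports Defs
begin


fun lf :: "(nat \<Rightarrow> nat) \<Rightarrow> (nat \<Rightarrow> nat \<Rightarrow> nat \<Rightarrow> real) \<Rightarrow> nat \<Rightarrow> nat \<Rightarrow> (nat \<Rightarrow> real) \<Rightarrow> nat \<Rightarrow> real" where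
  "lf d \<theta> k 0 v = v"
| "lf d \<theta> k (Suc m) v = (if Suc m \<le> k then v else (\<lambda>i. \<Sum>j<d (Suc m). \<theta> (Suc m) i j * lf d \<theta> k m v j))"

definition ev :: "nat \<Rightarrow> nat \<Rightarrow> real" where "ev i = (\<lambda>c. if c = i then 1 else 0)"

lemma lf_le: "m \<le> k \<Longrightarrow> lf d \<theta> k m v = v"
  by (induction m) auto

lemma lf_Suc: "k \<le> m \<Longrightarrow> lf d \<theta> k (Suc m) v = (\<lambda>i. \<Sum>j<d (Suc m). \<theta> (Suc m) i j * lf d \<theta> k m v j)"
  by simp

declare lf.simps(2)[simp del]

lemma layer_out_lf: "layer_out d \<theta> m x = lf d \<theta> 0 m x"
  by (induction m) (auto simp: lf_Suc)

lemma lf_lin: "k \<le> m \<Longrightarrow> (m = k \<longrightarrow> c < d (Suc k)) \<Longrightarrow>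
   lf d \<theta> k m v c = (\<Sum>b<d (Suc k). v b * lf d \<theta> k m (ev b) c)"
proof (induction m arbitrary: c)
  case 0
  then show ?case by (auto simp: ev_def lf_le if_distrib sum.delta cong: if_cong)
next
  case (Suc m)
  show ?case
  proof (cases "Suc m = k")
    case True
    then show ?thesis using Suc.prems by (auto simp: ev_def lf_le if_distrib sum.delta cong: if_cong)
  next
    case False
    then have km: "k \<le> m" using Suc.prems by auto
    have IH: "\<And>j. j < d (Suc m) \<Longrightarrow> lf d \<theta> k m v j = (\<Sum>b<d (Suc k). v b * lf d \<theta> k m (ev b) j)"
      using Suc.IH km by auto
    have "lf d \<theta> k (Suc m) v c = (\<Sum>j<d (Suc m). \<theta> (Suc m) c j * (\<Sum>b<d (Suc k). v b * lf d \<theta> k m (ev b) j))"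
      using IH km by (auto simp: lf_Suc intro!: sum.cong)
    also have "\<dots> = (\<Sum>b<d (Suc k). v b * (\<Sum>j<d (Suc m). \<theta> (Suc m) c j * lf d \<theta> k m (ev b) j))"
      by (simp add: sum_distrib_left sum_distrib_right mult_ac sum.swap[of _ "{..<d (Suc m)}"])
    finally show ?thesis using km by (simp add: lf_Suc)
  qed
qed

lemma perturb_lo:
  assumes "(k, i, j) \<in> param_idx d D"
  shows "layer_out d (perturb \<theta> (k,i,j) t) m x = (\<lambda>c. layer_out d \<theta> m x c +
     (if k \<le> m then t * layer_out d \<theta> (k-1) x j * lf d \<theta> k m (ev i) c else 0))"
proof (induction m)
  case 0
  then show ?case using assms by (auto simp: param_idx_def)
next
  case (Suc m)
  have k1: "1 \<le> k" and jk: "j < d k" using assms by (auto simp: param_idx_def)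
  show ?case
  proof (cases "Suc m < k")
    case True
    then show ?thesis using Suc by (auto simp: perturb_def)
  next
    case False
    note F = False
    show ?thesis
    proof (cases "Suc m = k")
      case True
      then have m: "m = k - 1" by auto
      have "layer_out d (perturb \<theta> (k,i,j) t) (Suc m) x = (\<lambda>c. \<Sum>j'<d k. (\<theta> k c j' + (if c = i \<and> j' = j then t else 0)) * layer_out d \<theta> m x j')"
        using Suc True by (auto simp: perturb_def intro!: ext sum.cong)
      also have "\<dots> = (\<lambda>c. layer_out d \<theta> (Suc m) x c + (if c = i then t * layer_out d \<theta> m x j else 0))"
      proof
        fix c
        have "(\<Sum>j'<d k. (if c = i \<and> j' = j then t else 0) * layer_out d \<theta> m x j') = (\<Sum>j'<d k. if j' = j then (if c = i then t * layer_out d \<theta> m x j else 0) else 0)"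
          by (rule sum.cong) auto
        also have "\<dots> = (if c = i then t * layer_out d \<theta> m x j else 0)" using jk by simp
        finally show "(\<Sum>j'<d k. (\<theta> k c j' + (if c = i \<and> j' = j then t else 0)) * layer_out d \<theta> m x j') = layer_out d \<theta> (Suc m) x c + (if c = i then t * layer_out d \<theta> m x j else 0)"
          using True[symmetric] by (simp add: distrib_right sum.distrib)
      qed
      finally show ?thesis using True m by (auto simp: lf_le ev_def)
    next
      case False
      then have km: "k \<le> m" using F by auto
      have "layer_out d (perturb \<theta> (k,i,j) t) (Suc m) x = (\<lambda>c. \<Sum>j'<d (Suc m). \<theta> (Suc m) c j' * (layer_out d \<theta> m x j' + t * layer_out d \<theta> (k-1) x j * lf d \<theta> k m (ev i) j'))"
        using Suc km False by (auto simp: perturb_def intro!: sum.cong)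
      also have "\<dots> = (\<lambda>c. layer_out d \<theta> (Suc m) x c + t * layer_out d \<theta> (k-1) x j * lf d \<theta> k (Suc m) (ev i) c)"
        using km by (auto simp: lf_Suc distrib_left sum.distrib sum_distrib_left mult_ac)
      finally show ?thesis using km by auto
    qed
  qed
qed

lemma deriv2_quad: "deriv (deriv (\<lambda>t::real. \<alpha> + \<beta> * t + \<gamma> * t\<^sup>2)) 0 = 2 * \<gamma>"
proof -
  have "deriv (\<lambda>t::real. \<alpha> + \<beta> * t + \<gamma> * t\<^sup>2) = (\<lambda>t. \<beta> + 2 * \<gamma> * t)"
  proof
    fix t :: real
    show "deriv (\<lambda>t::real. \<alpha> + \<beta> * t + \<gamma> * t\<^sup>2) t = \<beta> + 2 * \<gamma> * t"
      by (rule DERIV_imp_deriv) (auto intro!: derivative_eq_intros)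
  qed
  moreover have "deriv (\<lambda>t::real. \<beta> + 2 * \<gamma> * t) 0 = 2 * \<gamma>"
    by (rule DERIV_imp_deriv) (auto intro!: derivative_eq_intros)
  ultimately show ?thesis by simp
qed

lemma deriv2_loss:
  assumes "(k, i, j) \<in> param_idx d D"
  shows "deriv (deriv (\<lambda>t. loss d D x y (perturb \<theta> (k,i,j) t))) 0
    = (layer_out d \<theta> (k-1) x j)\<^sup>2 * (\<Sum>c<d (Suc D). (lf d \<theta> k D (ev i) c)\<^sup>2)"
proof -
  have kD: "k \<le> D" using assms by (auto simp: param_idx_def)
  define s where "s = layer_out d \<theta> (k-1) x j"
  define g where "g = lf d \<theta> k D (ev i)"
  define N where "N = net d D \<theta> x"
  have "(\<lambda>t. loss d D x y (perturb \<theta> (k,i,j) t)) = (\<lambda>t. 1/2 * (\<Sum>c<d (Suc D). (y c - N c)\<^sup>2)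
      + (- (\<Sum>c<d (Suc D). (y c - N c) * s * g c)) * t + (1/2 * (\<Sum>c<d (Suc D). (s * g c)\<^sup>2)) * t\<^sup>2)"
  proof
    fix t
    have "loss d D x y (perturb \<theta> (k,i,j) t) = 1/2 * (\<Sum>c<d (Suc D). (y c - N c - t * s * g c)\<^sup>2)"
      unfolding loss_def net_def perturb_lo[OF assms] using kD by (simp add: s_def g_def N_def net_def diff_diff_eq)
    also have "\<dots> = 1/2 * (\<Sum>c<d (Suc D). (y c - N c)\<^sup>2 - 2 * t * ((y c - N c) * s * g c) + t\<^sup>2 * (s * g c)\<^sup>2)"
      by (intro arg_cong2[where f="(*)"] refl sum.cong) (auto simp: power2_eq_square algebra_simps)
    also have "\<dots> = 1/2 * (\<Sum>c<d (Suc D). (y c - N c)\<^sup>2)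
      + (- (\<Sum>c<d (Suc D). (y c - N c) * s * g c)) * t + (1/2 * (\<Sum>c<d (Suc D). (s * g c)\<^sup>2)) * t\<^sup>2"
      by (simp add: sum.distrib sum_subtractf sum_distrib_left sum_distrib_right algebra_simps)
    finally show "loss d D x y (perturb \<theta> (k,i,j) t) = \<dots>" .
  qed
  note eq = this
  show ?thesis unfolding eq deriv2_quad
    by (simp add: s_def g_def power_mult_distrib sum_distrib_left)
qed



lemma integrable_xx:
  fixes M :: "((nat \<Rightarrow> real) \<times> (nat \<Rightarrow> real)) measure"
  assumes "\<And>i. i < d 1 \<Longrightarrow> (\<lambda>xy. fst xy i) \<in> borel_measurable M"
    and "\<And>i. i < d 1 \<Longrightarrow> integrable M (\<lambda>xy. (fst xy i)\<^sup>2)"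
    and "a < d 1" "b < d 1"
  shows "integrable M (\<lambda>xy. fst xy a * fst xy b)"
proof (rule Bochner_Integration.integrable_bound)
  show "integrable M (\<lambda>xy. (fst xy a)\<^sup>2 + (fst xy b)\<^sup>2)" using assms by auto
  show "(\<lambda>xy. fst xy a * fst xy b) \<in> borel_measurable M" using assms by auto
  show "AE x in M. norm (fst x a * fst x b) \<le> norm ((fst x a)\<^sup>2 + (fst x b)\<^sup>2)"
  proof (rule AE_I2)
    fix x :: "(nat \<Rightarrow> real) \<times> (nat \<Rightarrow> real)"
    have h: "2 * \<bar>fst x a\<bar> * \<bar>fst x b\<bar> \<le> (fst x a)\<^sup>2 + (fst x b)\<^sup>2"
      using sum_squares_bound[of "\<bar>fst x a\<bar>" "\<bar>fst x b\<bar>"] by simp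
    have "0 \<le> \<bar>fst x a\<bar> * \<bar>fst x b\<bar>" by simp
    then have "\<bar>fst x a * fst x b\<bar> \<le> (fst x a)\<^sup>2 + (fst x b)\<^sup>2"
      using h by (simp only: abs_mult)
    then show "norm (fst x a * fst x b) \<le> norm ((fst x a)\<^sup>2 + (fst x b)\<^sup>2)" by simp
  qed
qed

lemma sharp_eq:
  fixes M :: "((nat \<Rightarrow> real) \<times> (nat \<Rightarrow> real)) measure"
  assumes meas: "\<And>i. i < d 1 \<Longrightarrow> (\<lambda>xy. fst xy i) \<in> borel_measurable M"
    and sq: "\<And>i. i < d 1 \<Longrightarrow> integrable M (\<lambda>xy. (fst xy i)\<^sup>2)"
  shows "sharpness d D M \<theta> = (\<Sum>k\<in>{1..D}. \<Sum>i<d (Suc k). \<Sum>j<d k.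
      (\<Sum>c<d (Suc D). (lf d \<theta> k D (ev i) c)\<^sup>2) *
      (\<Sum>a<d 1. \<Sum>b<d 1. (\<integral>xy. fst xy a * fst xy b \<partial>M) * (lf d \<theta> 0 (k-1) (ev a) j * lf d \<theta> 0 (k-1) (ev b) j)))"
proof -
  have trm: "(\<integral>xy. deriv (deriv (\<lambda>t. loss d D (fst xy) (snd xy) (perturb \<theta> (k,i,j) t))) 0 \<partial>M)
     = (\<Sum>c<d (Suc D). (lf d \<theta> k D (ev i) c)\<^sup>2) *
      (\<Sum>a<d 1. \<Sum>b<d 1. (\<integral>xy. fst xy a * fst xy b \<partial>M) * (lf d \<theta> 0 (k-1) (ev a) j * lf d \<theta> 0 (k-1) (ev b) j))"
    if p: "(k,i,j) \<in> param_idx d D" for k i j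
  proof -
    have k1: "1 \<le> k" and jk: "j < d k" using p by (auto simp: param_idx_def)
    define G where "G a = lf d \<theta> 0 (k-1) (ev a) j" for a
    define Q where "Q = (\<Sum>c<d (Suc D). (lf d \<theta> k D (ev i) c)\<^sup>2)"
    have s: "layer_out d \<theta> (k-1) x j = (\<Sum>a<d 1. x a * G a)" for x
      unfolding layer_out_lf G_def using jk k1 by (subst lf_lin) auto
    have "(\<lambda>xy. deriv (deriv (\<lambda>t. loss d D (fst xy) (snd xy) (perturb \<theta> (k,i,j) t))) 0)
        = (\<lambda>xy. \<Sum>a<d 1. \<Sum>b<d 1. (fst xy a * fst xy b) * (Q * (G a * G b)))"
    proof
      fix xy :: "(nat \<Rightarrow> real) \<times> (nat \<Rightarrow> real)"
      have "(\<Sum>a<d 1. fst xy a * G a)\<^sup>2 * Q = (\<Sum>a<d 1. \<Sum>b<d 1. (fst xy a * G a) * (fst xy b * G b) * Q)"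
        unfolding power2_eq_square sum_product by (simp only: sum_distrib_right)
      also have "\<dots> = (\<Sum>a<d 1. \<Sum>b<d 1. (fst xy a * fst xy b) * (Q * (G a * G b)))"
        by (intro sum.cong refl) (simp add: mult_ac)
      finally show "deriv (deriv (\<lambda>t. loss d D (fst xy) (snd xy) (perturb \<theta> (k,i,j) t))) 0 = \<dots>"
        unfolding deriv2_loss[OF p] s Q_def by simp
    qed
    note eqf = this
    have "(\<integral>xy. deriv (deriv (\<lambda>t. loss d D (fst xy) (snd xy) (perturb \<theta> (k,i,j) t))) 0 \<partial>M)
        = (\<Sum>a<d 1. \<Sum>b<d 1. (\<integral>xy. fst xy a * fst xy b \<partial>M) * (Q * (G a * G b)))"
    proof -
      have ix: "\<And>a b. a < d 1 \<Longrightarrow> b < d 1 \<Longrightarrow> integrable M (\<lambda>xy. fst xy a * fst xy b)"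
        using integrable_xx[of d M, OF meas sq] by blast
      have ix0: "\<And>a b. a < d (Suc 0) \<Longrightarrow> b < d (Suc 0) \<Longrightarrow> integrable M (\<lambda>xy. fst xy a * fst xy b)"
        using ix by simp
      have "(\<integral>xy. (\<Sum>a<d 1. \<Sum>b<d 1. fst xy a * fst xy b * (Q * (G a * G b))) \<partial>M)
         = (\<Sum>a<d 1. \<integral>xy. (\<Sum>b<d 1. fst xy a * fst xy b * (Q * (G a * G b))) \<partial>M)"
        by (rule Bochner_Integration.integral_sum[where f="\<lambda>a xy. \<Sum>b<d 1. fst xy a * fst xy b * (Q * (G a * G b))"]) (auto intro!: integrable_sum ix0)
      also have "\<dots> = (\<Sum>a<d 1. \<Sum>b<d 1. \<integral>xy. fst xy a * fst xy b * (Q * (G a * G b)) \<partial>M)"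
        by (intro sum.cong refl) (rule Bochner_Integration.integral_sum[where f="\<lambda>b xy. fst xy _ * fst xy b * (Q * (G _ * G b))"], auto intro!: ix0)
      finally show ?thesis unfolding eqf by simp

    qed
    then show ?thesis 
      by (simp add: Q_def G_def sum_distrib_left mult.left_commute)
  qed
  have PI: "param_idx d D = Sigma {1..D} (\<lambda>k. {..<d (Suc k)} \<times> {..<d k})"
    by (auto simp: param_idx_def)
  define H where "H k i j = (\<Sum>c<d (Suc D). (lf d \<theta> k D (ev i) c)\<^sup>2) *
      (\<Sum>a<d 1. \<Sum>b<d 1. (\<integral>xy. fst xy a * fst xy b \<partial>M) * (lf d \<theta> 0 (k-1) (ev a) j * lf d \<theta> 0 (k-1) (ev b) j))" for k i j
  have "sharpness d D M \<theta> = (\<Sum>(k,q)\<in>Sigma {1..D} (\<lambda>k. {..<d (Suc k)} \<times> {..<d k}). H k (fst q) (snd q))"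
    unfolding sharpness_def PI[symmetric]
  proof (intro sum.cong refl)
    fix p assume "p \<in> param_idx d D"
    then show "(\<integral>xy. deriv (deriv (\<lambda>t. loss d D (fst xy) (snd xy) (perturb \<theta> p t))) 0 \<partial>M) = (case p of (k, q) \<Rightarrow> H k (fst q) (snd q))"
      using trm unfolding H_def by (cases p) auto
  qed
  also have "\<dots> = (\<Sum>k\<in>{1..D}. \<Sum>q\<in>{..<d (Suc k)} \<times> {..<d k}. H k (fst q) (snd q))"
    by (rule sum.Sigma[symmetric]) auto
  also have "\<dots> = (\<Sum>k\<in>{1..D}. \<Sum>i<d (Suc k). \<Sum>j<d k. H k i j)"
    by (intro sum.cong refl) (auto simp: sum.cartesian_product split_beta intro!: sum.cong)
  finally show ?thesis unfolding H_def .
qed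



locale netsetup = prob_space P for P :: "'w measure" +
  fixes W :: "'w \<Rightarrow> nat \<Rightarrow> nat \<Rightarrow> nat \<Rightarrow> real" and d :: "nat \<Rightarrow> nat" and D :: nat and \<sigma> :: "nat \<Rightarrow> real"
  assumes sig_pos: "\<And>k. k \<in> {1..D} \<Longrightarrow> \<sigma> k > 0"
    and indepW: "indep_vars (\<lambda>_. borel) (\<lambda>(k, i, j) \<omega>. W \<omega> k i j) (param_idx d D)"
    and distW: "\<And>k i j. (k, i, j) \<in> param_idx d D \<Longrightarrow>
           distributed P lborel (\<lambda>\<omega>. W \<omega> k i j) (\<lambda>v. ennreal (normal_density 0 (\<sigma> k) v))"
begin

definition Wv :: "'w \<Rightarrow> nat \<times> nat \<times> nat \<Rightarrow> real" where
  "Wv \<omega> p = W \<omega> (fst p) (fst (snd p)) (snd (snd p))"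

lemma indepWv: "indep_vars (\<lambda>_. borel) (\<lambda>p \<omega>. Wv \<omega> p) (param_idx d D)"
proof -
  have "(\<lambda>(k, i, j) \<omega>. W \<omega> k i j) = (\<lambda>p \<omega>. Wv \<omega> p)"
    by (auto simp: fun_eq_iff Wv_def split: prod.split)
  then show ?thesis using indepW by simp
qed

definition dep :: "(nat \<times> nat \<times> nat) set \<Rightarrow> ('w \<Rightarrow> real) \<Rightarrow> bool" where
  "dep J Y \<longleftrightarrow> (\<exists>g \<in> borel_measurable (PiM J (\<lambda>_. borel)). \<forall>\<omega>. Y \<omega> = g (restrict (\<lambda>p. Wv \<omega> p) J))"

lemma dep_const: "dep J (\<lambda>\<omega>. c)"
  unfolding dep_def by (intro bexI[of _ "\<lambda>_. c"]) auto

lemma dep_var: "p \<in> J \<Longrightarrow> dep J (\<lambda>\<omega>. Wv \<omega> p)"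
  unfolding dep_def by (intro bexI[of _ "\<lambda>f. f p"]) auto

lemma dep_add: "dep J X \<Longrightarrow> dep J Y \<Longrightarrow> dep J (\<lambda>\<omega>. X \<omega> + Y \<omega>)"
  unfolding dep_def
proof (elim bexE)
  fix g1 g2 assume g1: "g1 \<in> borel_measurable (PiM J (\<lambda>_. borel))" "\<forall>\<omega>. X \<omega> = g1 (restrict (\<lambda>p. Wv \<omega> p) J)"
    and g2: "g2 \<in> borel_measurable (PiM J (\<lambda>_. borel))" "\<forall>\<omega>. Y \<omega> = g2 (restrict (\<lambda>p. Wv \<omega> p) J)"
  show "\<exists>g\<in>borel_measurable (PiM J (\<lambda>_. borel)). \<forall>\<omega>. X \<omega> + Y \<omega> = g (restrict (\<lambda>p. Wv \<omega> p) J)"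
    using g1 g2 by (intro bexI[of _ "\<lambda>f. g1 f + g2 f"]) auto
qed

lemma dep_mult: "dep J X \<Longrightarrow> dep J Y \<Longrightarrow> dep J (\<lambda>\<omega>. X \<omega> * Y \<omega>)"
  unfolding dep_def
proof (elim bexE)
  fix g1 g2 assume g1: "g1 \<in> borel_measurable (PiM J (\<lambda>_. borel))" "\<forall>\<omega>. X \<omega> = g1 (restrict (\<lambda>p. Wv \<omega> p) J)"
    and g2: "g2 \<in> borel_measurable (PiM J (\<lambda>_. borel))" "\<forall>\<omega>. Y \<omega> = g2 (restrict (\<lambda>p. Wv \<omega> p) J)"
  show "\<exists>g\<in>borel_measurable (PiM J (\<lambda>_. borel)). \<forall>\<omega>. X \<omega> * Y \<omega> = g (restrict (\<lambda>p. Wv \<omega> p) J)"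
    using g1 g2 by (intro bexI[of _ "\<lambda>f. g1 f * g2 f"]) auto
qed

lemma dep_mono: "J \<subseteq> J' \<Longrightarrow> dep J Y \<Longrightarrow> dep J' Y"
  unfolding dep_def
proof (elim bexE)
  fix g assume J: "J \<subseteq> J'" and g: "g \<in> borel_measurable (PiM J (\<lambda>_. borel))" "\<forall>\<omega>. Y \<omega> = g (restrict (\<lambda>p. Wv \<omega> p) J)"
  have m: "(\<lambda>f. g (restrict f J)) \<in> borel_measurable (PiM J' (\<lambda>_. borel))"
    using measurable_comp[OF measurable_restrict_subset[OF J] g(1)] by (simp add: comp_def)
  have "restrict (restrict (\<lambda>p. Wv \<omega> p) J') J = restrict (\<lambda>p. Wv \<omega> p) J" for \<omega>
    using J by (auto simp: fun_eq_iff restrict_def)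
  then show "\<exists>g\<in>borel_measurable (PiM J' (\<lambda>_. borel)). \<forall>\<omega>. Y \<omega> = g (restrict (\<lambda>p. Wv \<omega> p) J')"
    using g m by (intro bexI[of _ "\<lambda>f. g (restrict f J)"]) auto
qed

lemma dep_sum: "finite S \<Longrightarrow> (\<And>s. s \<in> S \<Longrightarrow> dep J (Y s)) \<Longrightarrow> dep J (\<lambda>\<omega>. \<Sum>s\<in>S. Y s \<omega>)"
proof (induction S rule: finite_induct)
  case empty
  then show ?case using dep_const[of J 0] by simp
next
  case (insert x F)
  then show ?case using dep_add[of J "Y x" "\<lambda>\<omega>. \<Sum>s\<in>F. Y s \<omega>"] by simp
qed

lemma dep_indep:
  assumes "J1 \<inter> J2 = {}" "J1 \<subseteq> param_idx d D" "J2 \<subseteq> param_idx d D" "dep J1 X" "dep J2 Y"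
  shows "indep_var borel X borel Y"
proof -
  obtain g1 where g1: "g1 \<in> borel_measurable (PiM J1 (\<lambda>_. borel))" "\<forall>\<omega>. X \<omega> = g1 (restrict (\<lambda>p. Wv \<omega> p) J1)"
    using assms(4) unfolding dep_def by blast
  obtain g2 where g2: "g2 \<in> borel_measurable (PiM J2 (\<lambda>_. borel))" "\<forall>\<omega>. Y \<omega> = g2 (restrict (\<lambda>p. Wv \<omega> p) J2)"
    using assms(5) unfolding dep_def by blast
  have "indep_var (PiM J1 (\<lambda>_. borel)) (\<lambda>\<omega>. restrict (\<lambda>p. Wv \<omega> p) J1) (PiM J2 (\<lambda>_. borel)) (\<lambda>\<omega>. restrict (\<lambda>p. Wv \<omega> p) J2)"
    by (rule indep_var_restrict[OF indepWv assms(1-3)])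
  from indep_var_compose[OF this g1(1) g2(1)]
  have "indep_var borel (g1 \<circ> (\<lambda>\<omega>. restrict (\<lambda>p. Wv \<omega> p) J1)) borel (g2 \<circ> (\<lambda>\<omega>. restrict (\<lambda>p. Wv \<omega> p) J2))" .
  moreover have "X = g1 \<circ> (\<lambda>\<omega>. restrict (\<lambda>p. Wv \<omega> p) J1)" "Y = g2 \<circ> (\<lambda>\<omega>. restrict (\<lambda>p. Wv \<omega> p) J2)"
    using g1 g2 by (auto simp: fun_eq_iff)
  ultimately show ?thesis by simp
qed

lemma dep_indep_int:
  assumes "J1 \<inter> J2 = {}" "J1 \<subseteq> param_idx d D" "J2 \<subseteq> param_idx d D" "dep J1 X" "dep J2 Y"
    "integrable P X" "integrable P Y"
  shows "integrable P (\<lambda>\<omega>. X \<omega> * Y \<omega>) \<and> expectation (\<lambda>\<omega>. X \<omega> * Y \<omega>) = expectation X * expectation Y"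
  using dep_indep[OF assms(1-5)] assms(6,7) indep_var_integrable indep_var_lebesgue_integral by blast

lemma normal_facts:
  assumes p: "p \<in> param_idx d D"
  shows "integrable P (\<lambda>\<omega>. Wv \<omega> p)" "expectation (\<lambda>\<omega>. Wv \<omega> p) = 0"
    "integrable P (\<lambda>\<omega>. (Wv \<omega> p)\<^sup>2)" "expectation (\<lambda>\<omega>. (Wv \<omega> p)\<^sup>2) = (\<sigma> (fst p))\<^sup>2"
proof -
  obtain k i j where pk: "p = (k, i, j)" by (cases p) auto
  have sp: "0 < \<sigma> k" using p pk sig_pos by (auto simp: param_idx_def)
  have D: "distributed P lborel (\<lambda>\<omega>. Wv \<omega> p) (\<lambda>v. ennreal (normal_density 0 (\<sigma> k) v))"
    using distW[of k i j] p pk by (simp add: Wv_def)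
  show i1: "integrable P (\<lambda>\<omega>. Wv \<omega> p)"
    by (rule distributed_integrable_var[OF D])
      (auto simp: normal_density_nonneg intro: integrable_normal_moment_nz_1[where \<sigma>="\<sigma> k" and \<mu>=0] sp)
  show e1: "expectation (\<lambda>\<omega>. Wv \<omega> p) = 0"
    using normal_distributed_expectation[OF sp D] .
  have "integrable lborel (\<lambda>x. normal_density 0 (\<sigma> k) x * x ^ 2)"
    using integrable_normal_moment[where k=2 and \<mu>=0 and \<sigma>="\<sigma> k"] sp by simp
  then show "integrable P (\<lambda>\<omega>. (Wv \<omega> p)\<^sup>2)"
    using distributed_integrable[OF D, of "\<lambda>x. x ^ 2"] by (simp add: normal_density_nonneg)
  show "expectation (\<lambda>\<omega>. (Wv \<omega> p)\<^sup>2) = (\<sigma> (fst p))\<^sup>2"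
    using normal_distributed_variance[OF sp D] e1 pk by simp
qed

lemma WW:
  assumes p: "p \<in> param_idx d D" and q: "q \<in> param_idx d D"
  shows "integrable P (\<lambda>\<omega>. Wv \<omega> p * Wv \<omega> q)"
    "expectation (\<lambda>\<omega>. Wv \<omega> p * Wv \<omega> q) = (if p = q then (\<sigma> (fst p))\<^sup>2 else 0)"
    "dep {p, q} (\<lambda>\<omega>. Wv \<omega> p * Wv \<omega> q)"
proof -
  show "dep {p, q} (\<lambda>\<omega>. Wv \<omega> p * Wv \<omega> q)"
    by (intro dep_mult dep_var) auto
  have "integrable P (\<lambda>\<omega>. Wv \<omega> p * Wv \<omega> q) \<and>
    expectation (\<lambda>\<omega>. Wv \<omega> p * Wv \<omega> q) = (if p = q then (\<sigma> (fst p))\<^sup>2 else 0)"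
  proof (cases "p = q")
    case True
    then show ?thesis using normal_facts[OF p] by (simp add: power2_eq_square)
  next
    case False
    then show ?thesis
      using dep_indep_int[of "{p}" "{q}" "\<lambda>\<omega>. Wv \<omega> p" "\<lambda>\<omega>. Wv \<omega> q"] p q
        normal_facts[OF p] normal_facts[OF q] dep_var[of p "{p}"] dep_var[of q "{q}"] by auto
  qed
  then show "integrable P (\<lambda>\<omega>. Wv \<omega> p * Wv \<omega> q)"
    "expectation (\<lambda>\<omega>. Wv \<omega> p * Wv \<omega> q) = (if p = q then (\<sigma> (fst p))\<^sup>2 else 0)" by auto
qed

end


context netsetup begin

definition Lay :: "nat set \<Rightarrow> (nat \<times> nat \<times> nat) set" where
  "Lay K = {p \<in> param_idx d D. fst p \<in> K}"

lemma lfW_Suc: "k \<le> n \<Longrightarrow> lf d (W \<omega>) k (Suc n) u b = (\<Sum>c<d (Suc n). Wv \<omega> (Suc n, b, c) * lf d (W \<omega>) k n u c)"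
  by (simp add: lf_Suc Wv_def)

lemma KL:
  assumes "k \<le> m"
  shows "m \<le> D \<longrightarrow> (\<forall>u v b b'. b < d (Suc m) \<longrightarrow> b' < d (Suc m) \<longrightarrow> integrable P (\<lambda>\<omega>. lf d (W \<omega>) k m u b * lf d (W \<omega>) k m v b'))
    \<and> (\<forall>u b. b < d (Suc m) \<longrightarrow> dep (Lay {k<..m}) (\<lambda>\<omega>. lf d (W \<omega>) k m u b))
    \<and> (\<forall>u v. expectation (\<lambda>\<omega>. \<Sum>c<d (Suc m). lf d (W \<omega>) k m u c * lf d (W \<omega>) k m v c)
          = (\<Prod>l\<in>{k<..m}. real (d (Suc l)) * (\<sigma> l)\<^sup>2) * (\<Sum>b<d (Suc k). u b * v b))"
  using assms
proof (induction m rule: dec_induct)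
  case base
  show ?case by (simp add: lf_le dep_const prob_space)
next
  case (step n)
  note n = step.hyps(1)
  show ?case
  proof
    assume SD: "Suc n \<le> D"
    have IH1: "\<And>u v b b'. b < d (Suc n) \<Longrightarrow> b' < d (Suc n) \<Longrightarrow> integrable P (\<lambda>\<omega>. lf d (W \<omega>) k n u b * lf d (W \<omega>) k n v b')"
      and IH2: "\<And>u b. b < d (Suc n) \<Longrightarrow> dep (Lay {k<..n}) (\<lambda>\<omega>. lf d (W \<omega>) k n u b)"
      and IH3: "\<And>u v. expectation (\<lambda>\<omega>. \<Sum>c<d (Suc n). lf d (W \<omega>) k n u c * lf d (W \<omega>) k n v c)
          = (\<Prod>l\<in>{k<..n}. real (d (Suc l)) * (\<sigma> l)\<^sup>2) * (\<Sum>b<d (Suc k). u b * v b)"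
      using step.IH SD by auto
    have TL: "integrable P (\<lambda>\<omega>. (Wv \<omega> (Suc n,b,c) * Wv \<omega> (Suc n,b',c')) * (lf d (W \<omega>) k n u c * lf d (W \<omega>) k n v c')) \<and>
      expectation (\<lambda>\<omega>. (Wv \<omega> (Suc n,b,c) * Wv \<omega> (Suc n,b',c')) * (lf d (W \<omega>) k n u c * lf d (W \<omega>) k n v c'))
        = (if b = b' \<and> c = c' then (\<sigma> (Suc n))\<^sup>2 else 0) * expectation (\<lambda>\<omega>. lf d (W \<omega>) k n u c * lf d (W \<omega>) k n v c')"
      if bb: "b < d (Suc (Suc n))" "b' < d (Suc (Suc n))" and cc: "c < d (Suc n)" "c' < d (Suc n)" for b b' c c' u v
    proof -
      have p: "(Suc n, b, c) \<in> param_idx d D" and q: "(Suc n, b', c') \<in> param_idx d D"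
        using bb cc SD by (auto simp: param_idx_def)
      have depY: "dep (Lay {k<..n}) (\<lambda>\<omega>. lf d (W \<omega>) k n u c * lf d (W \<omega>) k n v c')"
        using IH2 cc by (intro dep_mult) auto
      have "integrable P (\<lambda>\<omega>. (Wv \<omega> (Suc n,b,c) * Wv \<omega> (Suc n,b',c')) * (lf d (W \<omega>) k n u c * lf d (W \<omega>) k n v c')) \<and>
        expectation (\<lambda>\<omega>. (Wv \<omega> (Suc n,b,c) * Wv \<omega> (Suc n,b',c')) * (lf d (W \<omega>) k n u c * lf d (W \<omega>) k n v c'))
        = expectation (\<lambda>\<omega>. Wv \<omega> (Suc n,b,c) * Wv \<omega> (Suc n,b',c')) * expectation (\<lambda>\<omega>. lf d (W \<omega>) k n u c * lf d (W \<omega>) k n v c')"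
        by (rule dep_indep_int[OF _ _ _ WW(3)[OF p q] depY WW(1)[OF p q] IH1[OF cc]]) (auto simp: Lay_def p q)
      then show ?thesis using WW[OF p q] by auto
    qed
    have TL1: "integrable P (\<lambda>\<omega>. (Wv \<omega> (Suc n,b,c) * Wv \<omega> (Suc n,b',c')) * (lf d (W \<omega>) k n u c * lf d (W \<omega>) k n v c'))"
      if "b < d (Suc (Suc n))" "b' < d (Suc (Suc n))" and "c < d (Suc n)" "c' < d (Suc n)" for b b' c c' u v
      using TL[OF that] by blast
    have EXP: "lf d (W \<omega>) k (Suc n) u b * lf d (W \<omega>) k (Suc n) v b' = (\<Sum>c<d (Suc n). \<Sum>c'<d (Suc n).
        (Wv \<omega> (Suc n,b,c) * Wv \<omega> (Suc n,b',c')) * (lf d (W \<omega>) k n u c * lf d (W \<omega>) k n v c'))" for \<omega> u v b b'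
      unfolding lfW_Suc[OF n] sum_product by (intro sum.cong refl) (simp add: mult_ac)
    have I1: "integrable P (\<lambda>\<omega>. lf d (W \<omega>) k (Suc n) u b * lf d (W \<omega>) k (Suc n) v b')"
      if "b < d (Suc (Suc n))" "b' < d (Suc (Suc n))" for u v b b'
      unfolding EXP by (intro Bochner_Integration.integrable_sum TL1) (use that in auto)
    have I2: "dep (Lay {k<..Suc n}) (\<lambda>\<omega>. lf d (W \<omega>) k (Suc n) u b)" if bI: "b < d (Suc (Suc n))" for u b
    proof -
      have sub: "Lay {k<..n} \<subseteq> Lay {k<..Suc n}" by (auto simp: Lay_def)
      have dl: "dep (Lay {k<..Suc n}) (\<lambda>\<omega>. lf d (W \<omega>) k n u c)" if "c < d (Suc n)" for c
        using dep_mono[OF sub] IH2 that by blast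
      have dv: "dep (Lay {k<..Suc n}) (\<lambda>\<omega>. Wv \<omega> (Suc n,b,c))" if c: "c < d (Suc n)" for c
        by (rule dep_var) (use bI c SD n in \<open>auto simp: Lay_def param_idx_def\<close>)
      show ?thesis unfolding lfW_Suc[OF n]
        by (intro dep_sum dep_mult dv dl) auto
    qed
    have I3: "expectation (\<lambda>\<omega>. \<Sum>b<d (Suc (Suc n)). lf d (W \<omega>) k (Suc n) u b * lf d (W \<omega>) k (Suc n) v b)
          = (\<Prod>l\<in>{k<..Suc n}. real (d (Suc l)) * (\<sigma> l)\<^sup>2) * (\<Sum>b<d (Suc k). u b * v b)" for u v
    proof -
      have "expectation (\<lambda>\<omega>. \<Sum>b<d (Suc (Suc n)). lf d (W \<omega>) k (Suc n) u b * lf d (W \<omega>) k (Suc n) v b)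
         = (\<Sum>b<d (Suc (Suc n)). expectation (\<lambda>\<omega>. lf d (W \<omega>) k (Suc n) u b * lf d (W \<omega>) k (Suc n) v b))"
        by (rule Bochner_Integration.integral_sum[where f="\<lambda>b \<omega>. lf d (W \<omega>) k (Suc n) u b * lf d (W \<omega>) k (Suc n) v b"])
          (auto intro!: I1)
      also have "\<dots> = (\<Sum>b<d (Suc (Suc n)). \<Sum>c<d (Suc n). \<Sum>c'<d (Suc n).
          expectation (\<lambda>\<omega>. (Wv \<omega> (Suc n,b,c) * Wv \<omega> (Suc n,b,c')) * (lf d (W \<omega>) k n u c * lf d (W \<omega>) k n v c')))"
      proof (intro sum.cong refl)
        fix b assume b: "b \<in> {..<d (Suc (Suc n))}"
        have "expectation (\<lambda>\<omega>. lf d (W \<omega>) k (Suc n) u b * lf d (W \<omega>) k (Suc n) v b)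
          = (\<Sum>c<d (Suc n). expectation (\<lambda>\<omega>. \<Sum>c'<d (Suc n). (Wv \<omega> (Suc n,b,c) * Wv \<omega> (Suc n,b,c')) * (lf d (W \<omega>) k n u c * lf d (W \<omega>) k n v c')))"
          unfolding EXP
          by (rule Bochner_Integration.integral_sum[where f="\<lambda>c \<omega>. \<Sum>c'<d (Suc n). (Wv \<omega> (Suc n,b,c) * Wv \<omega> (Suc n,b,c')) * (lf d (W \<omega>) k n u c * lf d (W \<omega>) k n v c')"])
            (intro Bochner_Integration.integrable_sum TL1, use b in auto)
        also have "\<dots> = (\<Sum>c<d (Suc n). \<Sum>c'<d (Suc n).
          expectation (\<lambda>\<omega>. (Wv \<omega> (Suc n,b,c) * Wv \<omega> (Suc n,b,c')) * (lf d (W \<omega>) k n u c * lf d (W \<omega>) k n v c')))"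
        proof (intro sum.cong refl)
          fix c assume c: "c \<in> {..<d (Suc n)}"
          show "expectation (\<lambda>\<omega>. \<Sum>c'<d (Suc n). (Wv \<omega> (Suc n,b,c) * Wv \<omega> (Suc n,b,c')) * (lf d (W \<omega>) k n u c * lf d (W \<omega>) k n v c'))
            = (\<Sum>c'<d (Suc n). expectation (\<lambda>\<omega>. (Wv \<omega> (Suc n,b,c) * Wv \<omega> (Suc n,b,c')) * (lf d (W \<omega>) k n u c * lf d (W \<omega>) k n v c')))"
            by (rule Bochner_Integration.integral_sum[where f="\<lambda>c' \<omega>. (Wv \<omega> (Suc n,b,c) * Wv \<omega> (Suc n,b,c')) * (lf d (W \<omega>) k n u c * lf d (W \<omega>) k n v c')"])
              (intro TL1, use b c in auto)
        qed
        finally show "expectation (\<lambda>\<omega>. lf d (W \<omega>) k (Suc n) u b * lf d (W \<omega>) k (Suc n) v b) = \<dots>" .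
      qed
      also have "\<dots> = (\<Sum>b<d (Suc (Suc n)). \<Sum>c<d (Suc n). \<Sum>c'<d (Suc n).
          (if c' = c then (\<sigma> (Suc n))\<^sup>2 * expectation (\<lambda>\<omega>. lf d (W \<omega>) k n u c * lf d (W \<omega>) k n v c) else 0))"
        using TL by (intro sum.cong refl) auto
      also have "\<dots> = (\<Sum>b<d (Suc (Suc n)). \<Sum>c<d (Suc n). (\<sigma> (Suc n))\<^sup>2 * expectation (\<lambda>\<omega>. lf d (W \<omega>) k n u c * lf d (W \<omega>) k n v c))"
        by simp
      also have "\<dots> = real (d (Suc (Suc n))) * (\<sigma> (Suc n))\<^sup>2 * (\<Sum>c<d (Suc n). expectation (\<lambda>\<omega>. lf d (W \<omega>) k n u c * lf d (W \<omega>) k n v c))"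
        by (simp add: sum_distrib_left mult.assoc)
      also have "(\<Sum>c<d (Suc n). expectation (\<lambda>\<omega>. lf d (W \<omega>) k n u c * lf d (W \<omega>) k n v c))
          = expectation (\<lambda>\<omega>. \<Sum>c<d (Suc n). lf d (W \<omega>) k n u c * lf d (W \<omega>) k n v c)"
        by (rule Bochner_Integration.integral_sum[where f="\<lambda>c \<omega>. lf d (W \<omega>) k n u c * lf d (W \<omega>) k n v c", symmetric])
          (auto intro!: IH1)
      finally have e: "expectation (\<lambda>\<omega>. \<Sum>b<d (Suc (Suc n)). lf d (W \<omega>) k (Suc n) u b * lf d (W \<omega>) k (Suc n) v b)
        = real (d (Suc (Suc n))) * (\<sigma> (Suc n))\<^sup>2 * expectation (\<lambda>\<omega>. \<Sum>c<d (Suc n). lf d (W \<omega>) k n u c * lf d (W \<omega>) k n v c)" .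
      have "{k<..Suc n} = insert (Suc n) {k<..n}" using n by auto
      then show ?thesis using IH3 e by (simp add: mult_ac)
    qed
    show "(\<forall>u v b b'. b < d (Suc (Suc n)) \<longrightarrow> b' < d (Suc (Suc n)) \<longrightarrow> integrable P (\<lambda>\<omega>. lf d (W \<omega>) k (Suc n) u b * lf d (W \<omega>) k (Suc n) v b'))
    \<and> (\<forall>u b. b < d (Suc (Suc n)) \<longrightarrow> dep (Lay {k<..Suc n}) (\<lambda>\<omega>. lf d (W \<omega>) k (Suc n) u b))
    \<and> (\<forall>u v. expectation (\<lambda>\<omega>. \<Sum>c<d (Suc (Suc n)). lf d (W \<omega>) k (Suc n) u c * lf d (W \<omega>) k (Suc n) v c)
          = (\<Prod>l\<in>{k<..Suc n}. real (d (Suc l)) * (\<sigma> l)\<^sup>2) * (\<Sum>b<d (Suc k). u b * v b))"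
      using I1 I2 I3 by blast
  qed
qed

end


lemma swap3: "(\<Sum>j\<in>J. \<Sum>a\<in>A. \<Sum>b\<in>B. g j a b) = (\<Sum>a\<in>A. \<Sum>b\<in>B. \<Sum>j\<in>J. (g j a b :: real))"
proof -
  have "(\<Sum>j\<in>J. \<Sum>a\<in>A. \<Sum>b\<in>B. g j a b) = (\<Sum>a\<in>A. \<Sum>j\<in>J. \<Sum>b\<in>B. g j a b)"
    by (rule sum.swap)
  also have "\<dots> = (\<Sum>a\<in>A. \<Sum>b\<in>B. \<Sum>j\<in>J. g j a b)"
    by (intro sum.cong refl sum.swap)
  finally show ?thesis .
qed

lemma prod_split_k:
  fixes f :: "nat \<Rightarrow> real"
  assumes "k \<in> {1..D}"
  shows "(\<Prod>l\<in>{0<..k-1}. f l) * (\<Prod>l\<in>{k<..D}. f l) = (\<Prod>l\<in>{1..D} - {k}. f l)"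
proof -
  have "{1..D} - {k} = {0<..k-1} \<union> {k<..D}" using assms by auto
  moreover have "{0<..k-1} \<inter> {k<..D} = {}" by auto
  ultimately show ?thesis by (simp add: prod.union_disjoint)
qed

lemma prod_dims:
  fixes d :: "nat \<Rightarrow> nat"
  assumes "1 \<le> D"
  shows "(\<Prod>l\<in>{1..D}. real (d (Suc l))) = real (d (Suc D)) * (\<Prod>k=2..D. real (d k))"
proof -
  have "(\<Prod>l\<in>{1..D}. real (d (Suc l))) = (\<Prod>m\<in>{Suc 1..Suc D}. real (d m))"
    by (rule prod.shift_bounds_cl_Suc_ivl[symmetric])
  also have "{Suc 1..Suc D} = insert (Suc D) {2..D}" using assms by auto
  finally show ?thesis by simp
qed

context netsetup begin

lemma int_sum_eq:
  assumes "finite S" "\<And>s. s \<in> S \<Longrightarrow> integrable P (f s) \<and> expectation (f s) = e s"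
  shows "integrable P (\<lambda>\<omega>. \<Sum>s\<in>S. f s \<omega>) \<and> expectation (\<lambda>\<omega>. \<Sum>s\<in>S. f s \<omega>) = (\<Sum>s\<in>S. e s)"
  using assms by (simp add: Bochner_Integration.integral_sum)

lemma main_expect:
  fixes M :: "((nat \<Rightarrow> real) \<times> (nat \<Rightarrow> real)) measure"
  assumes D1: "D \<ge> 1"
    and meas: "\<And>i. i < d 1 \<Longrightarrow> (\<lambda>xy. fst xy i) \<in> borel_measurable M"
    and sq: "\<And>i. i < d 1 \<Longrightarrow> integrable M (\<lambda>xy. (fst xy i)\<^sup>2)"
  shows "expectation (\<lambda>\<omega>. sharpness d D M (W \<omega>))
           = real (d (Suc D)) * (\<Prod>k=2..D. real (d k)) * (\<Sum>i<d 1. \<integral>xy. (fst xy i)\<^sup>2 \<partial>M)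
             * (\<Sum>k=1..D. \<Prod>j\<in>{1..D} - {k}. (\<sigma> j)\<^sup>2)"
proof -
  define A where "A \<omega> k i = (\<Sum>c<d (Suc D). lf d (W \<omega>) k D (ev i) c * lf d (W \<omega>) k D (ev i) c)" for \<omega> k i
  define B where "B \<omega> k j a b = lf d (W \<omega>) 0 (k-1) (ev a) j * lf d (W \<omega>) 0 (k-1) (ev b) j" for \<omega> k j a b
  define S where "S a b = (\<integral>xy. fst xy a * fst xy b \<partial>M)" for a b
  define f where "f l = real (d (Suc l)) * (\<sigma> l)\<^sup>2" for l
  define P1 where "P1 k = (\<Prod>l\<in>{0<..k-1}. f l)" for k
  define P2 where "P2 k = (\<Prod>l\<in>{k<..D}. f l)" for k
  have F1: "integrable P (\<lambda>\<omega>. A \<omega> k i * B \<omega> k j a b) \<and>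
      expectation (\<lambda>\<omega>. A \<omega> k i * B \<omega> k j a b) = expectation (\<lambda>\<omega>. A \<omega> k i) * expectation (\<lambda>\<omega>. B \<omega> k j a b)"
    if k: "k \<in> {1..D}" and i: "i < d (Suc k)" and j: "j < d k" and a: "a < d 1" and b: "b < d 1" for k i j a b
  proof -
    have KA: "\<forall>u v b b'. b < d (Suc D) \<longrightarrow> b' < d (Suc D) \<longrightarrow> integrable P (\<lambda>\<omega>. lf d (W \<omega>) k D u b * lf d (W \<omega>) k D v b')"
      "\<forall>u b. b < d (Suc D) \<longrightarrow> dep (Lay {k<..D}) (\<lambda>\<omega>. lf d (W \<omega>) k D u b)"
      using KL[of k D] k by auto
    have k1: "Suc (k - 1) = k" using k by auto
    have KB: "\<forall>u v b b'. b < d k \<longrightarrow> b' < d k \<longrightarrow> integrable P (\<lambda>\<omega>. lf d (W \<omega>) 0 (k-1) u b * lf d (W \<omega>) 0 (k-1) v b')"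
      "\<forall>u b. b < d k \<longrightarrow> dep (Lay {0<..k-1}) (\<lambda>\<omega>. lf d (W \<omega>) 0 (k-1) u b)"
      using KL[of 0 "k-1"] k k1 by auto
    have iA: "integrable P (\<lambda>\<omega>. A \<omega> k i)" unfolding A_def
      using KA(1) by (intro Bochner_Integration.integrable_sum) auto
    have dA: "dep (Lay {k<..D}) (\<lambda>\<omega>. A \<omega> k i)" unfolding A_def
      using KA(2) by (intro dep_sum dep_mult) auto
    have iB: "integrable P (\<lambda>\<omega>. B \<omega> k j a b)" unfolding B_def using KB(1) j by auto
    have dB: "dep (Lay {0<..k-1}) (\<lambda>\<omega>. B \<omega> k j a b)" unfolding B_def
      using KB(2) j by (intro dep_mult) auto
    show ?thesis
      by (rule dep_indep_int[OF _ _ _ dA dB iA iB]) (auto simp: Lay_def)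
  qed
  have F2: "expectation (\<lambda>\<omega>. A \<omega> k i) = P2 k" if k: "k \<in> {1..D}" and i: "i < d (Suc k)" for k i
  proof -
    have "expectation (\<lambda>\<omega>. A \<omega> k i) = P2 k * (\<Sum>b<d (Suc k). ev i b * ev i b)"
      unfolding A_def P2_def f_def using KL[of k D] k by auto
    also have "(\<Sum>b<d (Suc k). ev i b * ev i b) = (\<Sum>b<d (Suc k). if b = i then 1 else 0)"
      by (intro sum.cong refl) (simp add: ev_def)
    also have "\<dots> = 1" using i by simp
    finally show ?thesis by simp
  qed
  have F3: "(\<Sum>j<d k. expectation (\<lambda>\<omega>. B \<omega> k j a b)) = P1 k * (if a = b then 1 else 0)"
    if k: "k \<in> {1..D}" and a: "a < d 1" and b: "b < d 1" for k a b
  proof -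
    have k1: "Suc (k - 1) = k" using k by auto
    have KB: "\<forall>u v b b'. b < d k \<longrightarrow> b' < d k \<longrightarrow> integrable P (\<lambda>\<omega>. lf d (W \<omega>) 0 (k-1) u b * lf d (W \<omega>) 0 (k-1) v b')"
      "\<forall>u v. expectation (\<lambda>\<omega>. \<Sum>c<d k. lf d (W \<omega>) 0 (k-1) u c * lf d (W \<omega>) 0 (k-1) v c)
          = (\<Prod>l\<in>{0<..k-1}. real (d (Suc l)) * (\<sigma> l)\<^sup>2) * (\<Sum>b<d (Suc 0). u b * v b)"
      using KL[of 0 "k-1"] k k1 by auto
    have "(\<Sum>j<d k. expectation (\<lambda>\<omega>. B \<omega> k j a b)) = expectation (\<lambda>\<omega>. \<Sum>j<d k. B \<omega> k j a b)"
      by (rule Bochner_Integration.integral_sum[symmetric]) (use KB(1) in \<open>auto simp: B_def\<close>)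
    also have "\<dots> = P1 k * (\<Sum>c<d (Suc 0). ev a c * ev b c)"
      using KB(2) unfolding B_def P1_def f_def by simp
    also have "(\<Sum>c<d (Suc 0). ev a c * ev b c) = (\<Sum>c<d (Suc 0). if c = a then (if a = b then 1 else 0) else 0)"
      by (intro sum.cong refl) (simp add: ev_def)
    also have "\<dots> = (if a = b then 1 else 0)"
      using a by simp
    finally show ?thesis .
  qed
  have SE: "sharpness d D M \<theta> = (\<Sum>k\<in>{1..D}. \<Sum>i<d (Suc k). \<Sum>j<d k.
      (\<Sum>c<d (Suc D). (lf d \<theta> k D (ev i) c)\<^sup>2) *
      (\<Sum>a<d 1. \<Sum>b<d 1. (\<integral>xy. fst xy a * fst xy b \<partial>M) * (lf d \<theta> 0 (k-1) (ev a) j * lf d \<theta> 0 (k-1) (ev b) j)))" for \<theta>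
    by (rule sharp_eq) (use meas sq in auto)
  have step1: "sharpness d D M (W \<omega>) = (\<Sum>k\<in>{1..D}. \<Sum>i<d (Suc k). \<Sum>j<d k. \<Sum>a<d 1. \<Sum>b<d 1.
      S a b * (A \<omega> k i * B \<omega> k j a b))" for \<omega>
    unfolding SE
    by (intro sum.cong refl) (simp add: A_def B_def S_def power2_eq_square sum_distrib_left mult_ac)
  have step2: "integrable P (\<lambda>\<omega>. \<Sum>k\<in>{1..D}. \<Sum>i<d (Suc k). \<Sum>j<d k. \<Sum>a<d 1. \<Sum>b<d 1.
      S a b * (A \<omega> k i * B \<omega> k j a b)) \<and>
     expectation (\<lambda>\<omega>. \<Sum>k\<in>{1..D}. \<Sum>i<d (Suc k). \<Sum>j<d k. \<Sum>a<d 1. \<Sum>b<d 1.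
      S a b * (A \<omega> k i * B \<omega> k j a b)) =
     (\<Sum>k\<in>{1..D}. \<Sum>i<d (Suc k). \<Sum>j<d k. \<Sum>a<d 1. \<Sum>b<d 1.
      S a b * (expectation (\<lambda>\<omega>. A \<omega> k i) * expectation (\<lambda>\<omega>. B \<omega> k j a b)))"
    by (intro int_sum_eq finite_atLeastAtMost finite_lessThan) (use F1 in \<open>auto simp del: One_nat_def\<close>)
  have step3: "(\<Sum>k\<in>{1..D}. \<Sum>i<d (Suc k). \<Sum>j<d k. \<Sum>a<d 1. \<Sum>b<d 1.
      S a b * (expectation (\<lambda>\<omega>. A \<omega> k i) * expectation (\<lambda>\<omega>. B \<omega> k j a b)))
     = (\<Sum>k\<in>{1..D}. real (d (Suc k)) * (P2 k * P1 k) * (\<Sum>a<d 1. S a a))"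
  proof (intro sum.cong refl)
    fix k assume k: "k \<in> {1..D}"
    have "(\<Sum>i<d (Suc k). \<Sum>j<d k. \<Sum>a<d 1. \<Sum>b<d 1.
      S a b * (expectation (\<lambda>\<omega>. A \<omega> k i) * expectation (\<lambda>\<omega>. B \<omega> k j a b)))
      = (\<Sum>i<d (Suc k). P2 k * (\<Sum>a<d 1. \<Sum>b<d 1. S a b * (\<Sum>j<d k. expectation (\<lambda>\<omega>. B \<omega> k j a b))))"
    proof (intro sum.cong refl)
      fix i assume i: "i \<in> {..<d (Suc k)}"
      show "(\<Sum>j<d k. \<Sum>a<d 1. \<Sum>b<d 1.
        S a b * (expectation (\<lambda>\<omega>. A \<omega> k i) * expectation (\<lambda>\<omega>. B \<omega> k j a b)))
        = P2 k * (\<Sum>a<d 1. \<Sum>b<d 1. S a b * (\<Sum>j<d k. expectation (\<lambda>\<omega>. B \<omega> k j a b)))"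
      proof -
        have "(\<Sum>j<d k. \<Sum>a<d 1. \<Sum>b<d 1.
          S a b * (expectation (\<lambda>\<omega>. A \<omega> k i) * expectation (\<lambda>\<omega>. B \<omega> k j a b)))
          = (\<Sum>a<d 1. \<Sum>b<d 1. \<Sum>j<d k. S a b * (P2 k * expectation (\<lambda>\<omega>. B \<omega> k j a b)))"
          unfolding F2[OF k i[simplified]] by (rule swap3)
        also have "\<dots> = (\<Sum>a<d 1. \<Sum>b<d 1. P2 k * (S a b * (\<Sum>j<d k. expectation (\<lambda>\<omega>. B \<omega> k j a b))))"
          by (intro sum.cong refl) (simp add: sum_distrib_left mult.left_commute)
        also have "\<dots> = P2 k * (\<Sum>a<d 1. \<Sum>b<d 1. S a b * (\<Sum>j<d k. expectation (\<lambda>\<omega>. B \<omega> k j a b)))"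
          by (simp only: sum_distrib_left)
        finally show ?thesis .
      qed
    qed
    also have "\<dots> = (\<Sum>i<d (Suc k). P2 k * (\<Sum>a<d 1. \<Sum>b<d 1. S a b * (P1 k * (if a = b then 1 else 0))))"
    proof (intro sum.cong refl arg_cong2[where f="(*)"])
      fix a b assume a: "a \<in> {..<d 1}" and b: "b \<in> {..<d 1}"
      show "(\<Sum>j<d k. expectation (\<lambda>\<omega>. B \<omega> k j a b)) = P1 k * (if a = b then 1 else 0)"
        using F3[OF k] a b by blast
    qed
    also have "\<dots> = (\<Sum>i<d (Suc k). P2 k * (\<Sum>a<d 1. S a a * P1 k))"
    proof (intro sum.cong refl arg_cong2[where f="(*)"])
      fix a assume a: "a \<in> {..<d 1}"
      have "(\<Sum>b<d 1. S a b * (P1 k * (if a = b then 1 else 0))) = (\<Sum>b<d 1. if b = a then S a a * P1 k else 0)"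
        by (intro sum.cong refl) auto
      also have "\<dots> = S a a * P1 k" using a by simp
      finally show "(\<Sum>b<d 1. S a b * (P1 k * (if a = b then 1 else 0))) = S a a * P1 k" .
    qed
    also have "\<dots> = real (d (Suc k)) * (P2 k * P1 k) * (\<Sum>a<d 1. S a a)"
      by (simp add: sum_distrib_right[symmetric] sum_distrib_left[symmetric] mult_ac)
    finally show "(\<Sum>i<d (Suc k). \<Sum>j<d k. \<Sum>a<d 1. \<Sum>b<d 1.
      S a b * (expectation (\<lambda>\<omega>. A \<omega> k i) * expectation (\<lambda>\<omega>. B \<omega> k j a b)))
      = real (d (Suc k)) * (P2 k * P1 k) * (\<Sum>a<d 1. S a a)" .
  qed
  have step4: "real (d (Suc k)) * (P2 k * P1 k) = real (d (Suc D)) * (\<Prod>k=2..D. real (d k)) * (\<Prod>j\<in>{1..D} - {k}. (\<sigma> j)\<^sup>2)"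
    if k: "k \<in> {1..D}" for k
  proof -
    have "P2 k * P1 k = (\<Prod>l\<in>{1..D} - {k}. f l)"
      unfolding P1_def P2_def using prod_split_k[OF k, of f] by (simp add: mult.commute)
    also have "\<dots> = (\<Prod>l\<in>{1..D} - {k}. real (d (Suc l))) * (\<Prod>l\<in>{1..D} - {k}. (\<sigma> l)\<^sup>2)"
      unfolding f_def by (rule prod.distrib)
    finally have "real (d (Suc k)) * (P2 k * P1 k) = (real (d (Suc k)) * (\<Prod>l\<in>{1..D} - {k}. real (d (Suc l)))) * (\<Prod>l\<in>{1..D} - {k}. (\<sigma> l)\<^sup>2)"
      by simp
    also have "real (d (Suc k)) * (\<Prod>l\<in>{1..D} - {k}. real (d (Suc l))) = (\<Prod>l\<in>{1..D}. real (d (Suc l)))"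
      using k by (simp add: prod.remove)
    finally show ?thesis using prod_dims[OF D1, of d] by simp
  qed
  have tr: "(\<Sum>a<d 1. S a a) = (\<Sum>i<d 1. \<integral>xy. (fst xy i)\<^sup>2 \<partial>M)"
    by (simp add: S_def power2_eq_square)
  have "expectation (\<lambda>\<omega>. sharpness d D M (W \<omega>)) = (\<Sum>k\<in>{1..D}. real (d (Suc k)) * (P2 k * P1 k) * (\<Sum>a<d 1. S a a))"
    unfolding step1 using step2 step3 by simp
  also have "\<dots> = (\<Sum>k\<in>{1..D}. real (d (Suc D)) * (\<Prod>k=2..D. real (d k)) * (\<Sum>a<d 1. S a a) * (\<Prod>j\<in>{1..D} - {k}. (\<sigma> j)\<^sup>2))"
  proof (intro sum.cong refl)
    fix k assume k: "k \<in> {1..D}"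
    show "real (d (Suc k)) * (P2 k * P1 k) * (\<Sum>a<d 1. S a a) = real (d (Suc D)) * (\<Prod>k=2..D. real (d k)) * (\<Sum>a<d 1. S a a) * (\<Prod>j\<in>{1..D} - {k}. (\<sigma> j)\<^sup>2)"
      unfolding step4[OF k] by (simp only: mult_ac)
  qed
  finally show ?thesis unfolding tr by (simp add: sum_distrib_left)
qed

end

theorem proposition1:
  fixes P :: "'w measure"
    and W :: "'w \<Rightarrow> nat \<Rightarrow> nat \<Rightarrow> nat \<Rightarrow> real"
    and M :: "((nat \<Rightarrow> real) \<times> (nat \<Rightarrow> real)) measure"
    and d :: "nat \<Rightarrow> nat" and D :: nat and \<sigma> :: "nat \<Rightarrow> real"
  assumes "D \<ge> 1"
    and "prob_space M"
    and "\<And>i. i < d 1 \<Longrightarrow> (\<lambda>xy. fst xy i) \<in> borel_measurable M"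
    and "\<And>i. i < d 1 \<Longrightarrow> integrable M (\<lambda>xy. (fst xy i)\<^sup>2)"
    and "prob_space P"
    and "\<And>k. k \<in> {1..D} \<Longrightarrow> \<sigma> k > 0"
    and "prob_space.indep_vars P (\<lambda>_. borel) (\<lambda>(k, i, j) \<omega>. W \<omega> k i j) (param_idx d D)"
    and "\<And>k i j. (k, i, j) \<in> param_idx d D \<Longrightarrow>
           distributed P lborel (\<lambda>\<omega>. W \<omega> k i j) (\<lambda>v. ennreal (normal_density 0 (\<sigma> k) v))"
  shows "(\<integral>\<omega>. sharpness d D M (W \<omega>) \<partial>P)
           = real (d (Suc D)) * (\<Prod>k=2..D. real (d k)) * (\<Sum>i<d 1. \<integral>xy. (fst xy i)\<^sup>2 \<partial>M)
             * (\<Sum>k=1..D. \<Prod>j\<in>{1..D} - {k}. (\<sigma> j)\<^sup>2)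
      \<and> (\<forall>s dd. (\<forall>k\<in>{1..D}. \<sigma> k = s) \<and> (\<forall>k\<in>{2..D}. d k = dd) \<longrightarrow>
           (\<integral>\<omega>. sharpness d D M (W \<omega>) \<partial>P)
             = real D * real (d (Suc D)) * (\<Sum>i<d 1. \<integral>xy. (fst xy i)\<^sup>2 \<partial>M)
               * (real dd * s\<^sup>2) ^ (D - 1))"
proof -
  interpret N: netsetup P W d D \<sigma>
    by (intro netsetup.intro netsetup_axioms.intro) (use assms in auto)
  have E: "(\<integral>\<omega>. sharpness d D M (W \<omega>) \<partial>P)
           = real (d (Suc D)) * (\<Prod>k=2..D. real (d k)) * (\<Sum>i<d 1. \<integral>xy. (fst xy i)\<^sup>2 \<partial>M)
             * (\<Sum>k=1..D. \<Prod>j\<in>{1..D} - {k}. (\<sigma> j)\<^sup>2)"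
    by (rule N.main_expect) (use assms in auto)
  show ?thesis
  proof (intro conjI allI impI)
    show "(\<integral>\<omega>. sharpness d D M (W \<omega>) \<partial>P)
           = real (d (Suc D)) * (\<Prod>k=2..D. real (d k)) * (\<Sum>i<d 1. \<integral>xy. (fst xy i)\<^sup>2 \<partial>M)
             * (\<Sum>k=1..D. \<Prod>j\<in>{1..D} - {k}. (\<sigma> j)\<^sup>2)" by (rule E)
  next
    fix s dd
    assume h: "(\<forall>k\<in>{1..D}. \<sigma> k = s) \<and> (\<forall>k\<in>{2..D}. d k = dd)"
    have p1: "(\<Prod>k=2..D. real (d k)) = real dd ^ (D - 1)"
    proof -
      have "(\<Prod>k=2..D. real (d k)) = (\<Prod>k=2..D. real dd)" using h by (intro prod.cong refl) auto
      also have "\<dots> = real dd ^ (D - 1)" by simp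
      finally show ?thesis .
    qed
    have p2: "(\<Sum>k=1..D. \<Prod>j\<in>{1..D} - {k}. (\<sigma> j)\<^sup>2) = real D * (s\<^sup>2) ^ (D - 1)"
    proof -
      have "(\<Prod>j\<in>{1..D} - {k}. (\<sigma> j)\<^sup>2) = (s\<^sup>2) ^ (D - 1)" if k: "k \<in> {1..D}" for k
      proof -
        have "(\<Prod>j\<in>{1..D} - {k}. (\<sigma> j)\<^sup>2) = (\<Prod>j\<in>{1..D} - {k}. s\<^sup>2)" using h by (intro prod.cong refl) auto
        also have "\<dots> = (s\<^sup>2) ^ card ({1..D} - {k})" by simp
        also have "card ({1..D} - {k}) = D - 1" using k by simp
        finally show ?thesis .
      qed
      then have "(\<Sum>k=1..D. \<Prod>j\<in>{1..D} - {k}. (\<sigma> j)\<^sup>2) = (\<Sum>k=1..D. (s\<^sup>2) ^ (D - 1))"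
        by (intro sum.cong refl) auto
      then show ?thesis by simp
    qed
    show "(\<integral>\<omega>. sharpness d D M (W \<omega>) \<partial>P)
             = real D * real (d (Suc D)) * (\<Sum>i<d 1. \<integral>xy. (fst xy i)\<^sup>2 \<partial>M)
               * (real dd * s\<^sup>2) ^ (D - 1)"
      unfolding E p1 p2 by (simp add: power_mult_distrib mult_ac)
  qed
qed

end
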